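(* Let $X$ be a Banach space, $B$ a subset of $B_{X^{*}}$ that (I)-generates $B_{X^{*}}$, and $A=(a_{nk})_{n,k\in\mathbb{N}}$ a regular matrix. Let $(x_n)_{n\in\mathbb{N}}$ be a bounded sequence in $X$ and $x\in X$ such that $(x^{*}(x_n))_{n\in\mathbb{N}}$ is $F_A$-convergent to $x^{*}(x)$ for every $x^{*}\in B$. Then $(x^{*}(x_n))_{n\in\mathbb{N}}$ is $F_A$-convergent to $x^{*}(x)$ for every $x^{*}\in X^{*}$. In particular, if $X$ is a real Banach space, the same holds with $F_A$-convergence replaced by almost convergence.
   Context: A complex matrix $A=(a_{nk})$ is regular if $\sup_n\sum_k|a_{nk}|<\infty$, $\lim_n\sum_k a_{nk}=1$ and $\lim_n a_{nk}=0$ for all $k$. A bounded scalar sequence $(s_k)$ is $F_A$-convergent to $s$ if $\sum_{k=1}^\infty a_{nk}s_{k+l}\to s$ as $n\to\infty$, uniformly in $l\in\mathbb{N}_0$. A Banach limit is a linear functional $L:\ell^\infty\to\mathbb{R}$ (real $\ell^\infty$) with $L(1,1,\dots)=1$, $L(\mathbf{x})\ge0$ whenever $\mathbf{x}\ge0$, and $L(T\mathbf{x})=L(\mathbf{x})$ where $T$ is the left shift. A bounded real sequence is almost convergent to $s$ if $L((s_k))=s$ for every Banach limit $L$. A subset $B\subseteq B_{X^*}$ (I)-generates $B_{X^*}$ if whenever $B=\bigcup_{n=1}^\infty B_n$, $B_{X^*}$ equals the norm-closure of the convex hull of $\bigcup_n\overline{\mathrm{co}}^{w^*}(B_n)$ (weak*-closed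 convex hulls). *)

theory Defs
  imports "HOL-Analysis.Analysis"
begin

text \<open>Complex Banach spaces are modelled as real Banach spaces together with a
  complex structure J (multiplication by the imaginary unit).\<close>

definition cscale :: "('a::real_vector \<Rightarrow> 'a) \<Rightarrow> complex \<Rightarrow> 'a \<Rightarrow> 'a" where
  "cscale J c x = Re c *\<^sub>R x + Im c *\<^sub>R J x"

definition complex_structure :: "('a::real_normed_vector \<Rightarrow> 'a) \<Rightarrow> bool" where
  "complex_structure J \<longleftrightarrow> linear J \<and> (\<forall>x. J (J x) = - x)
     \<and> (\<forall>c x. norm (cscale J c x) = cmod c * norm x)"

definition cdual :: "('a::real_normed_vector \<Rightarrow> 'a) \<Rightarrow> ('a \<Rightarrow> complex) set" where
  "cdual J = {f. bounded_linear f \<and> (\<forall>x. f (J x) = \<i> * f x)}"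

definition rdual :: "('a::real_normed_vector \<Rightarrow> real) set" where
  "rdual = {f. bounded_linear f}"

definition dual_ball :: "('a::real_normed_vector \<Rightarrow> 'b::real_normed_vector) set \<Rightarrow> ('a \<Rightarrow> 'b) set" where
  "dual_ball D = {f \<in> D. onorm f \<le> 1}"

definition fconv :: "('a \<Rightarrow> 'b::real_vector) set \<Rightarrow> ('a \<Rightarrow> 'b) set" where
  "fconv S = {f. \<exists>(m::nat) u g. (\<forall>i<m. 0 \<le> u i \<and> g i \<in> S) \<and> (\<Sum>i<m. u i) = 1
                      \<and> f = (\<lambda>y. \<Sum>i<m. u i *\<^sub>R g i y)}"

definition wstar_closure :: "('a \<Rightarrow> 'b::real_normed_vector) set \<Rightarrow> ('a \<Rightarrow> 'b) set \<Rightarrow> ('a \<Rightarrow> 'b) set" where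
  "wstar_closure D S = {f \<in> D. \<forall>F e. finite F \<and> e > 0 \<longrightarrow>
                         (\<exists>g\<in>S. \<forall>y\<in>F. norm (g y - f y) < e)}"

definition dnorm_closure :: "('a::real_normed_vector \<Rightarrow> 'b::real_normed_vector) set \<Rightarrow> ('a \<Rightarrow> 'b) set \<Rightarrow> ('a \<Rightarrow> 'b) set" where
  "dnorm_closure D S = {f \<in> D. \<forall>e>0. \<exists>g\<in>S. onorm (\<lambda>y. f y - g y) < e}"

definition I_generates :: "('a::real_normed_vector \<Rightarrow> 'b::real_normed_vector) set \<Rightarrow> ('a \<Rightarrow> 'b) set \<Rightarrow> bool" where
  "I_generates D B \<longleftrightarrow> B \<subseteq> dual_ball D \<and>
     (\<forall>Bn :: nat \<Rightarrow> ('a \<Rightarrow> 'b) set. B = (\<Union>n. Bn n) \<longrightarrow>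
        dual_ball D = dnorm_closure D (fconv (\<Union>n. wstar_closure D (fconv (Bn n)))))"

text \<open>Regular (complex) matrices; indices start at 0.\<close>
definition regular_matrix :: "(nat \<Rightarrow> nat \<Rightarrow> complex) \<Rightarrow> bool" where
  "regular_matrix a \<longleftrightarrow>
     (\<exists>M. \<forall>n. summable (\<lambda>k. cmod (a n k)) \<and> (\<Sum>k. cmod (a n k)) \<le> M)
     \<and> (\<lambda>n. \<Sum>k. a n k) \<longlonglongrightarrow> 1
     \<and> (\<forall>k. (\<lambda>n. a n k) \<longlonglongrightarrow> 0)"

definition FA_convergent :: "(nat \<Rightarrow> nat \<Rightarrow> complex) \<Rightarrow> (nat \<Rightarrow> complex) \<Rightarrow> complex \<Rightarrow> bool" where
  "FA_convergent a s t \<longleftrightarrow> Bseq s \<and>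
     (\<forall>e>0. \<exists>N. \<forall>n\<ge>N. \<forall>l. cmod ((\<Sum>k. a n k * s (k + l)) - t) < e)"

text \<open>Banach limits on real l-infinity (bounded real sequences); values of L
  outside l-infinity are irrelevant.\<close>
definition banach_limit :: "((nat \<Rightarrow> real) \<Rightarrow> real) \<Rightarrow> bool" where
  "banach_limit L \<longleftrightarrow>
     (\<forall>x y. Bseq x \<and> Bseq y \<longrightarrow> L (\<lambda>k. x k + y k) = L x + L y)
     \<and> (\<forall>c x. Bseq x \<longrightarrow> L (\<lambda>k. c * x k) = c * L x)
     \<and> L (\<lambda>k. 1) = 1
     \<and> (\<forall>x. Bseq x \<and> (\<forall>k. x k \<ge> 0) \<longrightarrow> L x \<ge> 0)
     \<and> (\<forall>x. Bseq x \<longrightarrow> L (\<lambda>k. x (Suc k)) = L x)"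

definition almost_convergent :: "(nat \<Rightarrow> real) \<Rightarrow> real \<Rightarrow> bool" where
  "almost_convergent s t \<longleftrightarrow> Bseq s \<and> (\<forall>L. banach_limit L \<longrightarrow> L s = t)"

end

theory Submission
  imports Defs
begin
lemma wsum_bound:
  fixes \<alpha> b :: "nat \<Rightarrow> complex"
  assumes s: "summable (\<lambda>k. cmod (\<alpha> k))" and b: "\<And>k. cmod (b k) \<le> c"
  shows "summable (\<lambda>k. \<alpha> k * b k)" "cmod (\<Sum>k. \<alpha> k * b k) \<le> (\<Sum>k. cmod (\<alpha> k)) * c"
proof -
  have c0: "0 \<le> c" using b[of 0] norm_ge_zero[of "b 0"] by linarith
  have le: "norm (\<alpha> k * b k) \<le> cmod (\<alpha> k) * c" for k
    unfolding norm_mult by (rule mult_left_mono[OF b]) simp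
  have s2: "summable (\<lambda>k. cmod (\<alpha> k) * c)" using s by (rule summable_mult2)
  have sn: "summable (\<lambda>k. norm (\<alpha> k * b k))"
    by (rule summable_comparison_test'[OF s2]) (simp add: le)
  show "summable (\<lambda>k. \<alpha> k * b k)" by (rule summable_norm_cancel[OF sn])
  have "cmod (\<Sum>k. \<alpha> k * b k) \<le> (\<Sum>k. norm (\<alpha> k * b k))" using summable_norm[OF sn] .
  also have "\<dots> \<le> (\<Sum>k. cmod (\<alpha> k) * c)" by (rule suminf_le[OF le sn s2])
  also have "\<dots> = (\<Sum>k. cmod (\<alpha> k)) * c" using suminf_mult2[OF s] by simp
  finally show "cmod (\<Sum>k. \<alpha> k * b k) \<le> (\<Sum>k. cmod (\<alpha> k)) * c" .
qed

lemma wsum_bound_split: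
  fixes \<alpha> b :: "nat \<Rightarrow> complex"
  assumes s: "summable (\<lambda>k. cmod (\<alpha> k))" and b: "\<And>k. cmod (b k) \<le> c"
    and h: "\<And>k. k < K \<Longrightarrow> cmod (b k) \<le> d" and d: "0 \<le> d"
  shows "cmod (\<Sum>k. \<alpha> k * b k) \<le> (\<Sum>k. cmod (\<alpha> k)) * d + (\<Sum>k. cmod (\<alpha> (k + K))) * c"
proof -
  have sm: "summable (\<lambda>k. \<alpha> k * b k)" by (rule wsum_bound(1)[OF s]) (rule b)
  have s': "summable (\<lambda>k. cmod (\<alpha> (k + K)))" using summable_ignore_initial_segment[OF s, of K] by simp
  have eq: "(\<Sum>k. \<alpha> k * b k) = (\<Sum>k. \<alpha> (k+K) * b (k+K)) + (\<Sum>k<K. \<alpha> k * b k)"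
    by (rule suminf_split_initial_segment[OF sm])
  have t1: "cmod (\<Sum>k. \<alpha> k * b k) \<le> cmod (\<Sum>k. \<alpha> (k+K) * b (k+K)) + cmod (\<Sum>k<K. \<alpha> k * b k)"
    unfolding eq by (rule norm_triangle_ineq)
  have t2: "cmod (\<Sum>k. \<alpha> (k+K) * b (k+K)) \<le> (\<Sum>k. cmod (\<alpha> (k + K))) * c"
    by (rule wsum_bound(2)[OF s', of "\<lambda>k. b (k+K)" c]) (rule b)
  have t3: "cmod (\<Sum>k<K. \<alpha> k * b k) \<le> (\<Sum>k<K. cmod (\<alpha> k) * d)"
  proof (rule order_trans[OF norm_sum], rule sum_mono)
    fix k assume "k \<in> {..<K}"
    hence "cmod (b k) \<le> d" using h by simp
    thus "cmod (\<alpha> k * b k) \<le> cmod (\<alpha> k) * d" unfolding norm_mult by (rule mult_left_mono) simp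
  qed
  have t4: "(\<Sum>k<K. cmod (\<alpha> k) * d) = (\<Sum>k<K. cmod (\<alpha> k)) * d" by (simp add: sum_distrib_right)
  have t5: "(\<Sum>k<K. cmod (\<alpha> k)) \<le> (\<Sum>k. cmod (\<alpha> k))"
    by (rule sum_le_suminf[OF s]) auto
  have t6: "(\<Sum>k<K. cmod (\<alpha> k)) * d \<le> (\<Sum>k. cmod (\<alpha> k)) * d"
    using t5 d by (rule mult_right_mono)
  show ?thesis proof -
    have "cmod (\<Sum>k<K. \<alpha> k * b k) \<le> (\<Sum>k. cmod (\<alpha> k)) * d" using t3 t4 t6 by simp
    thus ?thesis using t1 t2 by simp
  qed
qed

definition Tv :: "(nat \<Rightarrow> nat \<Rightarrow> complex) \<Rightarrow> ('b \<Rightarrow> complex) \<Rightarrow> (nat \<Rightarrow> 'a) \<Rightarrow> 'a \<Rightarrow> nat \<Rightarrow> nat \<Rightarrow> ('a \<Rightarrow> 'b) \<Rightarrow> complex" where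
  "Tv a \<phi> xs x n l g = (\<Sum>k. a n k * \<phi> (g (xs (k + l)))) - \<phi> (g x)"

lemma phi_bd_seq:
  fixes \<phi> :: "'b::real_normed_vector \<Rightarrow> complex"
  assumes bl: "bounded_linear \<phi>" and g: "\<And>j. norm (g (xs j)) \<le> c"
  shows "\<exists>C. \<forall>j. cmod (\<phi> (g (xs j))) \<le> C"
proof -
  obtain K where K: "K > 0" "\<And>z. norm (\<phi> z) \<le> norm z * K"
    using bounded_linear.pos_bounded[OF bl] by blast
  have "cmod (\<phi> (g (xs j))) \<le> c * K" for j
    using K(2)[of "g (xs j)"] mult_right_mono[OF g[of j], of K] K(1) by linarith
  thus ?thesis by blast
qed

lemma summ_T:
  fixes \<phi> :: "'b::real_normed_vector \<Rightarrow> complex"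
  assumes bl: "bounded_linear \<phi>" and s: "summable (\<lambda>k. cmod (\<alpha> k))" and g: "\<And>j. norm (g (xs j)) \<le> c"
  shows "summable (\<lambda>k. \<alpha> k * \<phi> (g (xs (k + l))))"
proof -
  obtain C where C: "\<And>j. cmod (\<phi> (g (xs j))) \<le> C" using phi_bd_seq[of \<phi> g xs c, OF bl g] by blast
  show ?thesis by (rule wsum_bound(1)[OF s]) (rule C)
qed

lemma Tv_lin:
  fixes \<phi> :: "'b::real_normed_vector \<Rightarrow> complex"
  assumes bl: "bounded_linear \<phi>" and s: "summable (\<lambda>k. cmod (a n k))"
    and bd: "\<And>i. i < p \<Longrightarrow> \<exists>c. \<forall>j. norm (g i (xs j)) \<le> c"
  shows "Tv a \<phi> xs x n l (\<lambda>y. \<Sum>i<p. u i *\<^sub>R g i y) = (\<Sum>i<p. of_real (u i) * Tv a \<phi> xs x n l (g i))"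
proof -
  have ph: "\<phi> (\<Sum>i<p. u i *\<^sub>R g i y) = (\<Sum>i<p. of_real (u i) * \<phi> (g i y))" for y
    by (simp add: linear_sum[OF bounded_linear.linear[OF bl]] linear_scale[OF bounded_linear.linear[OF bl]] scaleR_conv_of_real)
  have sm: "summable (\<lambda>k. of_real (u i) * (a n k * \<phi> (g i (xs (k + l)))))" if iin: "i \<in> {..<p}" for i
  proof -
    obtain c where "\<forall>j. norm (g i (xs j)) \<le> c" using bd iin by auto
    hence "summable (\<lambda>k. a n k * \<phi> (g i (xs (k + l))))" using summ_T[OF bl s] by blast
    thus ?thesis by (rule summable_mult)
  qed
  have "(\<Sum>k. a n k * \<phi> (\<Sum>i<p. u i *\<^sub>R g i (xs (k + l))))
      = (\<Sum>k. \<Sum>i<p. of_real (u i) * (a n k * \<phi> (g i (xs (k + l)))))"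
    unfolding ph by (simp add: sum_distrib_left mult.left_commute)
  also have "\<dots> = (\<Sum>i<p. \<Sum>k. of_real (u i) * (a n k * \<phi> (g i (xs (k + l)))))"
    by (rule suminf_sum) (rule sm)
  also have "\<dots> = (\<Sum>i<p. of_real (u i) * (\<Sum>k. a n k * \<phi> (g i (xs (k + l)))))"
  proof (rule sum.cong[OF refl])
    fix i assume i: "i \<in> {..<p}"
    obtain c where "\<forall>j. norm (g i (xs j)) \<le> c" using bd i by auto
    hence "summable (\<lambda>k. a n k * \<phi> (g i (xs (k + l))))" using summ_T[OF bl s] by blast
    thus "(\<Sum>k. of_real (u i) * (a n k * \<phi> (g i (xs (k + l))))) = of_real (u i) * (\<Sum>k. a n k * \<phi> (g i (xs (k + l))))"
      by (rule suminf_mult)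
  qed
  finally show ?thesis unfolding Tv_def ph by (simp add: right_diff_distrib sum_subtractf)
qed

lemma Tv_diff:
  fixes \<phi> :: "'b::real_normed_vector \<Rightarrow> complex"
  assumes bl: "bounded_linear \<phi>" and s: "summable (\<lambda>k. cmod (a n k))"
    and g: "\<And>j. norm (g (xs j)) \<le> c1" and h: "\<And>j. norm (h (xs j)) \<le> c2"
  shows "Tv a \<phi> xs x n l g - Tv a \<phi> xs x n l h
       = (\<Sum>k. a n k * \<phi> (g (xs (k + l)) - h (xs (k + l)))) - \<phi> (g x - h x)"
proof -
  have sg: "summable (\<lambda>k. a n k * \<phi> (g (xs (k + l))))" by (rule summ_T[where g=g and xs=xs, OF bl s g])
  have sh: "summable (\<lambda>k. a n k * \<phi> (h (xs (k + l))))" by (rule summ_T[where g=h and xs=xs, OF bl s h])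
  have lin: "linear \<phi>" by (rule bounded_linear.linear[OF bl])
  have "(\<Sum>k. a n k * \<phi> (g (xs (k + l))) - a n k * \<phi> (h (xs (k + l))))
       = (\<Sum>k. a n k * \<phi> (g (xs (k + l)))) - (\<Sum>k. a n k * \<phi> (h (xs (k + l))))"
    by (rule suminf_diff[OF sg sh, symmetric])
  thus ?thesis unfolding Tv_def
    by (simp add: linear_diff[OF lin] right_diff_distrib)
qed

lemma wstar_T:
  fixes \<phi> :: "'b::real_normed_vector \<Rightarrow> complex" and D :: "('a::real_normed_vector \<Rightarrow> 'b) set"
  assumes bl: "bounded_linear \<phi>" and s: "summable (\<lambda>k. cmod (a n k))"
    and R: "\<And>j. norm (xs j) \<le> R"
    and Dbl: "\<forall>f\<in>D. bounded_linear f"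
    and g: "g \<in> wstar_closure D S"
    and S: "\<forall>h\<in>S. (\<forall>y. norm (h y) \<le> norm y) \<and> cmod (Tv a \<phi> xs x n l h) \<le> \<epsilon>"
  shows "cmod (Tv a \<phi> xs x n l g) \<le> \<epsilon>"
proof (rule field_le_epsilon)
  fix \<eta> :: real assume eta: "0 < \<eta>"
  obtain K\<phi> where K\<phi>: "K\<phi> > 0" "\<And>z. norm (\<phi> z) \<le> norm z * K\<phi>"
    using bounded_linear.pos_bounded[OF bl] by blast
  have gD: "g \<in> D" and gw: "\<forall>F e. finite F \<and> e > 0 \<longrightarrow> (\<exists>h\<in>S. \<forall>y\<in>F. norm (h y - g y) < e)"
    using g unfolding wstar_closure_def by auto
  obtain cg where cg: "cg > 0" "\<And>y. norm (g y) \<le> norm y * cg"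
    using bounded_linear.pos_bounded[of g] Dbl gD by blast
  have R0: "0 \<le> R" using R[of 0] norm_ge_zero[of "xs 0"] by linarith
  define Ma where "Ma = (\<Sum>k. cmod (a n k))"
  have Ma0: "0 \<le> Ma" unfolding Ma_def by (rule suminf_nonneg[OF s]) simp
  define c0 where "c0 = K\<phi> * (R * cg + R)"
  have c00: "0 \<le> c0" unfolding c0_def using K\<phi>(1) R0 cg(1) by simp
  define r where "r = \<eta> / (2 * (c0 + 1))"
  have r0: "0 < r" unfolding r_def using eta c00 by simp
  obtain K where K: "\<forall>m\<ge>K. norm (\<Sum>i. cmod (a n (i + m))) < r"
    using suminf_exist_split[OF r0 s] by blast
  have tail: "(\<Sum>i. cmod (a n (i + K))) < r" using K by auto
  define \<delta> where "\<delta> = \<eta> / (2 * (Ma + 1) * K\<phi>)"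
  have d0: "0 < \<delta>" unfolding \<delta>_def using eta Ma0 K\<phi>(1) by simp
  define F where "F = (\<lambda>k. xs (k + l)) ` {..<K} \<union> {x}"
  have "finite F" unfolding F_def by simp
  then obtain h where hS: "h \<in> S" and hF: "\<forall>y\<in>F. norm (h y - g y) < \<delta>"
    using gw d0 by blast
  have hb: "\<forall>y. norm (h y) \<le> norm y" and hT: "cmod (Tv a \<phi> xs x n l h) \<le> \<epsilon>" using S hS by auto
  have gxs: "norm (g (xs j)) \<le> R * cg" for j
    using cg(2)[of "xs j"] mult_right_mono[OF R[of j], of cg] cg(1) by linarith
  have hxs: "norm (h (xs j)) \<le> R" for j using hb R order_trans by blast
  have dif: "Tv a \<phi> xs x n l g - Tv a \<phi> xs x n l h
       = (\<Sum>k. a n k * \<phi> (g (xs (k + l)) - h (xs (k + l)))) - \<phi> (g x - h x)"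
    by (rule Tv_diff[where a=a and n=n, OF bl s]) (rule gxs, rule hxs)
  have bnd: "cmod (\<phi> (g (xs j) - h (xs j))) \<le> c0" for j
  proof -
    have "norm (g (xs j) - h (xs j)) \<le> R * cg + R"
      using norm_triangle_ineq4[of "g (xs j)" "h (xs j)"] gxs[of j] hxs[of j] by linarith
    hence "norm (g (xs j) - h (xs j)) * K\<phi> \<le> (R * cg + R) * K\<phi>" using K\<phi>(1) by (simp add: mult_right_mono)
    thus ?thesis using K\<phi>(2)[of "g (xs j) - h (xs j)"] unfolding c0_def by (simp add: mult.commute)
  qed
  have closeF: "cmod (\<phi> (g y - h y)) \<le> K\<phi> * \<delta>" if "y \<in> F" for y
  proof -
    have "norm (g y - h y) \<le> \<delta>" using hF that by (simp add: norm_minus_commute less_imp_le)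
    hence "norm (g y - h y) * K\<phi> \<le> \<delta> * K\<phi>" using K\<phi>(1) by (simp add: mult_right_mono)
    thus ?thesis using K\<phi>(2)[of "g y - h y"] by (simp add: mult.commute)
  qed
  have s1: "cmod (\<Sum>k. a n k * \<phi> (g (xs (k + l)) - h (xs (k + l)))) \<le> Ma * (K\<phi> * \<delta>) + (\<Sum>i. cmod (a n (i + K))) * c0"
    unfolding Ma_def
  proof (rule wsum_bound_split[OF s])
    show "\<And>k. cmod (\<phi> (g (xs (k + l)) - h (xs (k + l)))) \<le> c0" by (rule bnd)
    show "\<And>k. k < K \<Longrightarrow> cmod (\<phi> (g (xs (k + l)) - h (xs (k + l)))) \<le> K\<phi> * \<delta>"
      by (rule closeF) (simp add: F_def)
    show "0 \<le> K\<phi> * \<delta>" using K\<phi>(1) d0 by simp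
  qed
  have s2: "cmod (\<phi> (g x - h x)) \<le> K\<phi> * \<delta>" by (rule closeF) (simp add: F_def)
  have e1: "(Ma + 1) * (K\<phi> * \<delta>) = \<eta> / 2" proof -
    define P where "P = (Ma + 1) * K\<phi>"
    have P: "P \<noteq> 0" unfolding P_def using K\<phi>(1) Ma0 by auto
    have "\<delta> = \<eta> / (2 * P)" unfolding \<delta>_def P_def by (simp add: mult.assoc)
    moreover have "(Ma + 1) * (K\<phi> * \<delta>) = P * \<delta>" unfolding P_def by (simp add: mult.assoc)
    ultimately show ?thesis using P by simp
  qed
  have e2: "(\<Sum>i. cmod (a n (i + K))) * c0 \<le> r * c0" using tail c00 by (simp add: mult_right_mono)
  have e3: "r * c0 \<le> \<eta> / 2"
  proof -
    have "r * c0 = (\<eta> / 2) * (c0 / (c0 + 1))" unfolding r_def by (simp add: field_simps)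
    also have "\<dots> \<le> (\<eta> / 2) * 1" using eta c00 by (intro mult_left_mono) simp_all
    finally show ?thesis by simp
  qed
  have "cmod (Tv a \<phi> xs x n l g - Tv a \<phi> xs x n l h) \<le> \<eta>"
  proof -
    have "cmod (Tv a \<phi> xs x n l g - Tv a \<phi> xs x n l h)
        \<le> cmod (\<Sum>k. a n k * \<phi> (g (xs (k + l)) - h (xs (k + l)))) + cmod (\<phi> (g x - h x))"
      unfolding dif by (rule norm_triangle_ineq4)
    thus ?thesis using s1 s2 e1 e2 e3 by (simp add: algebra_simps)
  qed
  thus "cmod (Tv a \<phi> xs x n l g) \<le> \<epsilon> + \<eta>"
    using hT norm_triangle_ineq2[of "Tv a \<phi> xs x n l g" "Tv a \<phi> xs x n l h"] by linarith
qed

lemma bl_bd_xs: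
  assumes "bounded_linear g" and R: "\<And>j. norm (xs j) \<le> R"
  shows "norm (g (xs j)) \<le> onorm g * R"
proof -
  have "norm (g (xs j)) \<le> onorm g * norm (xs j)" by (rule onorm[OF assms(1)])
  also have "\<dots> \<le> onorm g * R" by (rule mult_left_mono[OF R onorm_pos_le[OF assms(1)]])
  finally show ?thesis .
qed

lemma FA_Tv:
  "FA_convergent a (\<lambda>n. \<phi> (f (xs n))) (\<phi> (f x)) \<longleftrightarrow>
     Bseq (\<lambda>n. \<phi> (f (xs n))) \<and> (\<forall>e>0. \<exists>N. \<forall>n\<ge>N. \<forall>l. cmod (Tv a \<phi> xs x n l f) < e)"
  unfolding FA_convergent_def Tv_def by simp

lemma fconv_bl:
  assumes "h \<in> fconv S" and "\<forall>g\<in>S. bounded_linear g"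
  shows "bounded_linear h"
proof -
  from assms(1) obtain m :: nat and u :: "nat \<Rightarrow> real" and g where g: "\<forall>i<m. 0 \<le> u i \<and> g i \<in> S" and h: "h = (\<lambda>y. \<Sum>i<m. u i *\<^sub>R g i y)"
    unfolding fconv_def by auto
  have "bounded_linear (\<lambda>y. \<Sum>i<m. u i *\<^sub>R g i y)"
  proof (rule bounded_linear_sum)
    fix i assume "i \<in> {..<m}"
    hence "bounded_linear (g i)" using g assms(2) by auto
    thus "bounded_linear (\<lambda>y. u i *\<^sub>R g i y)" by (rule bounded_linear_const_scaleR)
  qed
  thus ?thesis using h by simp
qed

lemma fconv_T':
  fixes \<phi> :: "'b::real_normed_vector \<Rightarrow> complex"
  assumes bl: "bounded_linear \<phi>" and s: "summable (\<lambda>k. cmod (a n k))"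
    and R: "\<And>j. norm (xs j) \<le> R"
    and g: "\<forall>i<m. 0 \<le> u i \<and> bounded_linear (g i) \<and> cmod (Tv a \<phi> xs x n l (g i)) \<le> \<epsilon>"
    and su: "(\<Sum>i<m. u i) = 1"
  shows "cmod (Tv a \<phi> xs x n l (\<lambda>y. \<Sum>i<m. u i *\<^sub>R g i y)) \<le> \<epsilon>"
proof -
  have bd: "\<exists>c. \<forall>j. norm (g i (xs j)) \<le> c" if "i < m" for i
  proof -
    have "bounded_linear (g i)" using g that by auto
    thus ?thesis by (intro exI allI) (rule bl_bd_xs[OF _ R])
  qed
  have "Tv a \<phi> xs x n l (\<lambda>y. \<Sum>i<m. u i *\<^sub>R g i y) = (\<Sum>i<m. of_real (u i) * Tv a \<phi> xs x n l (g i))"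
    by (rule Tv_lin[where a=a and n=n, OF bl s]) (rule bd)
  hence "cmod (Tv a \<phi> xs x n l (\<lambda>y. \<Sum>i<m. u i *\<^sub>R g i y)) \<le> (\<Sum>i<m. norm (of_real (u i) * Tv a \<phi> xs x n l (g i)))"
    by (simp add: norm_sum)
  also have "\<dots> \<le> (\<Sum>i<m. u i * \<epsilon>)"
  proof (rule sum_mono)
    fix i assume "i \<in> {..<m}"
    hence "0 \<le> u i" "cmod (Tv a \<phi> xs x n l (g i)) \<le> \<epsilon>" using g by auto
    thus "norm (of_real (u i) * Tv a \<phi> xs x n l (g i)) \<le> u i * \<epsilon>"
      by (simp add: norm_mult mult_left_mono)
  qed
  also have "\<dots> = \<epsilon>" using su by (simp add: sum_distrib_right[symmetric])
  finally show ?thesis .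
qed

lemma fconv_T:
  fixes \<phi> :: "'b::real_normed_vector \<Rightarrow> complex"
  assumes bl: "bounded_linear \<phi>" and s: "summable (\<lambda>k. cmod (a n k))"
    and R: "\<And>j. norm (xs j) \<le> R"
    and h: "h \<in> fconv S"
    and S: "\<forall>g\<in>S. bounded_linear g \<and> cmod (Tv a \<phi> xs x n l g) \<le> \<epsilon>"
  shows "cmod (Tv a \<phi> xs x n l h) \<le> \<epsilon>"
proof -
  from h obtain m :: nat and u :: "nat \<Rightarrow> real" and g where g: "\<forall>i<m. 0 \<le> u i \<and> g i \<in> S"
    and su: "(\<Sum>i<m. u i) = 1" and hh: "h = (\<lambda>y. \<Sum>i<m. u i *\<^sub>R g i y)"
    unfolding fconv_def by auto
  have "\<forall>i<m. 0 \<le> u i \<and> bounded_linear (g i) \<and> cmod (Tv a \<phi> xs x n l (g i)) \<le> \<epsilon>"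
    using g S by auto
  thus ?thesis unfolding hh by (rule fconv_T'[where a=a and n=n, OF bl s R _ su])
qed

lemma core_ball:
  fixes \<phi> :: "'b::real_normed_vector \<Rightarrow> complex" and D :: "('a::real_normed_vector \<Rightarrow> 'b) set"
  assumes bl: "bounded_linear \<phi>" and Dbl: "\<forall>f\<in>D. bounded_linear f"
    and IG: "I_generates D B"
    and M: "\<And>n. summable (\<lambda>k. cmod (a n k))" "\<And>n. (\<Sum>k. cmod (a n k)) \<le> M"
    and R: "\<And>j. norm (xs j) \<le> R"
    and hB: "\<forall>f\<in>B. \<forall>e>0. \<exists>N. \<forall>n\<ge>N. \<forall>l. cmod (Tv a \<phi> xs x n l f) < e"
    and f0: "f0 \<in> dual_ball D" and e: "e > 0"
  shows "\<exists>N. \<forall>n\<ge>N. \<forall>l. cmod (Tv a \<phi> xs x n l f0) < e"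
proof -
  obtain K\<phi> where K\<phi>: "K\<phi> > 0" "\<And>z. norm (\<phi> z) \<le> norm z * K\<phi>"
    using bounded_linear.pos_bounded[OF bl] by blast
  have R0: "0 \<le> R" using R[of 0] norm_ge_zero[of "xs 0"] by linarith
  have "0 \<le> (\<Sum>k. cmod (a 0 k))" by (rule suminf_nonneg[OF M(1)]) simp
  hence M0: "0 \<le> M" using M(2)[of 0] by linarith
  define \<epsilon> where "\<epsilon> = e / 2"
  have \<epsilon>0: "\<epsilon> > 0" unfolding \<epsilon>_def using e by simp
  define Bn where "Bn m = {g\<in>B. \<forall>n\<ge>m. \<forall>l. cmod (Tv a \<phi> xs x n l g) \<le> \<epsilon>}" for m
  have BU: "B = (\<Union>m. Bn m)"
  proof
    show "B \<subseteq> (\<Union>m. Bn m)"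
    proof
      fix g assume g: "g \<in> B"
      then obtain N where "\<forall>n\<ge>N. \<forall>l. cmod (Tv a \<phi> xs x n l g) < \<epsilon>" using hB \<epsilon>0 by blast
      hence "g \<in> Bn N" unfolding Bn_def using g by (auto intro: less_imp_le)
      thus "g \<in> (\<Union>m. Bn m)" by blast
    qed
    show "(\<Union>m. Bn m) \<subseteq> B" unfolding Bn_def by auto
  qed
  have Bball: "B \<subseteq> dual_ball D" using IG unfolding I_generates_def by auto
  have dc: "dual_ball D = dnorm_closure D (fconv (\<Union>m. wstar_closure D (fconv (Bn m))))"
    using IG BU unfolding I_generates_def by blast
  have Bprop: "bounded_linear g \<and> (\<forall>y. norm (g y) \<le> norm y)" if "g \<in> B" for g
  proof -
    have "g \<in> D" "onorm g \<le> 1" using Bball that unfolding dual_ball_def by auto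
    hence bg: "bounded_linear g" using Dbl by auto
    have "norm (g y) \<le> norm y" for y
    proof -
      have "norm (g y) \<le> onorm g * norm y" by (rule onorm[OF bg])
      also have "\<dots> \<le> 1 * norm y" by (rule mult_right_mono[OF \<open>onorm g \<le> 1\<close>]) simp
      finally show ?thesis by simp
    qed
    thus ?thesis using bg by blast
  qed
  have W: "cmod (Tv a \<phi> xs x n l g) \<le> \<epsilon>" if g: "g \<in> wstar_closure D (fconv (Bn m))" and nm: "n \<ge> m" for g m n l
  proof (rule wstar_T[OF bl M(1) R Dbl g], intro ballI conjI allI)
    fix h y assume h: "h \<in> fconv (Bn m)"
    then obtain p :: nat and u :: "nat \<Rightarrow> real" and gi where gi: "\<forall>i<p. 0 \<le> u i \<and> gi i \<in> Bn m"
      and su: "(\<Sum>i<p. u i) = 1" and hh: "h = (\<lambda>y. \<Sum>i<p. u i *\<^sub>R gi i y)"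
      unfolding fconv_def by auto
    have "norm (h y) \<le> (\<Sum>i<p. norm (u i *\<^sub>R gi i y))" unfolding hh by (rule norm_sum)
    also have "\<dots> \<le> (\<Sum>i<p. u i * norm y)"
    proof (rule sum_mono)
      fix i assume "i \<in> {..<p}"
      hence "0 \<le> u i" "gi i \<in> B" using gi unfolding Bn_def by auto
      thus "norm (u i *\<^sub>R gi i y) \<le> u i * norm y" using Bprop by (simp add: mult_left_mono)
    qed
    also have "\<dots> = norm y" using su by (simp add: sum_distrib_right[symmetric])
    finally show "norm (h y) \<le> norm y" .
  next
    fix h assume h: "h \<in> fconv (Bn m)"
    show "cmod (Tv a \<phi> xs x n l h) \<le> \<epsilon>"
    proof (rule fconv_T[OF bl M(1) R h], intro ballI conjI)
      fix g assume "g \<in> Bn m"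
      thus "bounded_linear g" "cmod (Tv a \<phi> xs x n l g) \<le> \<epsilon>" using Bprop nm unfolding Bn_def by auto
    qed
  qed
  have Wbl: "bounded_linear g" if "g \<in> wstar_closure D S" for g S
    using that Dbl unfolding wstar_closure_def by auto
  have V: "\<exists>N. \<forall>n\<ge>N. \<forall>l. cmod (Tv a \<phi> xs x n l h) \<le> \<epsilon>"
    if h: "h \<in> fconv (\<Union>m. wstar_closure D (fconv (Bn m)))" for h
  proof -
    from h obtain p :: nat and u :: "nat \<Rightarrow> real" and gi where
      gi: "\<forall>i<p. 0 \<le> u i \<and> gi i \<in> (\<Union>m. wstar_closure D (fconv (Bn m)))"
      and su: "(\<Sum>i<p. u i) = 1" and hh: "h = (\<lambda>y. \<Sum>i<p. u i *\<^sub>R gi i y)"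
      unfolding fconv_def by auto
    have "\<forall>i. \<exists>m. i < p \<longrightarrow> gi i \<in> wstar_closure D (fconv (Bn m))" using gi by blast
    then obtain mi where mi: "\<And>i. i < p \<Longrightarrow> gi i \<in> wstar_closure D (fconv (Bn (mi i)))" by metis
    show ?thesis
    proof (intro exI allI impI)
      fix n l assume n: "n \<ge> (\<Sum>i<p. mi i)"
      show "cmod (Tv a \<phi> xs x n l h) \<le> \<epsilon>"
      unfolding hh
      proof (rule fconv_T'[where a=a and n=n, OF bl M(1) R _ su], intro allI impI conjI)
        fix i assume i: "i < p"
        show "0 \<le> u i" using gi i by auto
        show "bounded_linear (gi i)" using Wbl mi[OF i] by blast
        have "mi i \<le> (\<Sum>i<p. mi i)" using i by (intro member_le_sum) auto
        hence "n \<ge> mi i" using n by linarith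
        thus "cmod (Tv a \<phi> xs x n l (gi i)) \<le> \<epsilon>" using W[OF mi[OF i]] by blast
      qed
    qed
  qed
  define Q where "Q = K\<phi> * (M * R + norm x)"
  have Q0: "0 \<le> Q" unfolding Q_def using K\<phi>(1) M0 R0 by simp
  define \<delta> where "\<delta> = e / (4 * (Q + 1))"
  have d0: "0 < \<delta>" unfolding \<delta>_def using e Q0 by simp
  have f0D: "f0 \<in> D" and "f0 \<in> dnorm_closure D (fconv (\<Union>m. wstar_closure D (fconv (Bn m))))"
    using f0 dc unfolding dual_ball_def by auto
  then obtain h where h: "h \<in> fconv (\<Union>m. wstar_closure D (fconv (Bn m)))"
    and hd: "onorm (\<lambda>y. f0 y - h y) < \<delta>"
    unfolding dnorm_closure_def using d0 by blast
  have bf0: "bounded_linear f0" using f0D Dbl by auto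
  have bh: "bounded_linear h" by (rule fconv_bl[OF h]) (use Wbl in blast)
  have bdf: "bounded_linear (\<lambda>y. f0 y - h y)" by (rule bounded_linear_sub[OF bf0 bh])
  obtain N where N: "\<forall>n\<ge>N. \<forall>l. cmod (Tv a \<phi> xs x n l h) \<le> \<epsilon>" using V[OF h] by blast
  have cb: "cmod (\<phi> (f0 y - h y)) \<le> K\<phi> * \<delta> * norm y" for y
  proof -
    have "norm (f0 y - h y) \<le> onorm (\<lambda>y. f0 y - h y) * norm y" by (rule onorm[OF bdf])
    also have "\<dots> \<le> \<delta> * norm y" using hd by (intro mult_right_mono) auto
    finally have "norm (f0 y - h y) * K\<phi> \<le> \<delta> * norm y * K\<phi>" using K\<phi>(1) by (simp add: mult_right_mono)
    thus ?thesis using K\<phi>(2)[of "f0 y - h y"] by (simp add: mult_ac)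
  qed
  have eQ: "\<delta> * Q \<le> e / 4"
  proof -
    have "\<delta> * Q = (e / 4) * (Q / (Q + 1))" unfolding \<delta>_def by (simp add: field_simps)
    also have "\<dots> \<le> (e / 4) * 1" using e Q0 by (intro mult_left_mono) simp_all
    finally show ?thesis by simp
  qed
  show ?thesis
  proof (intro exI allI impI)
    fix n l assume n: "N \<le> n"
    have dif: "Tv a \<phi> xs x n l f0 - Tv a \<phi> xs x n l h
       = (\<Sum>k. a n k * \<phi> (f0 (xs (k + l)) - h (xs (k + l)))) - \<phi> (f0 x - h x)"
      by (rule Tv_diff[where a=a and n=n, OF bl M(1)]) (rule bl_bd_xs[OF bf0 R], rule bl_bd_xs[OF bh R])
    have b1: "cmod (\<phi> (f0 (xs (k + l)) - h (xs (k + l)))) \<le> K\<phi> * \<delta> * R" for k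
    proof -
      have "K\<phi> * \<delta> * norm (xs (k + l)) \<le> K\<phi> * \<delta> * R"
        by (rule mult_left_mono[OF R]) (use K\<phi>(1) d0 in simp)
      thus ?thesis using cb[of "xs (k + l)"] by linarith
    qed
    have s1: "cmod (\<Sum>k. a n k * \<phi> (f0 (xs (k + l)) - h (xs (k + l)))) \<le> (\<Sum>k. cmod (a n k)) * (K\<phi> * \<delta> * R)"
      by (rule wsum_bound(2)[OF M(1)]) (rule b1)
    also have "\<dots> \<le> M * (K\<phi> * \<delta> * R)" using M(2)[of n] K\<phi>(1) d0 R0 by (intro mult_right_mono) simp_all
    finally have s1': "cmod (\<Sum>k. a n k * \<phi> (f0 (xs (k + l)) - h (xs (k + l)))) \<le> M * (K\<phi> * \<delta> * R)" .
    have "cmod (Tv a \<phi> xs x n l f0 - Tv a \<phi> xs x n l h)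
        \<le> cmod (\<Sum>k. a n k * \<phi> (f0 (xs (k + l)) - h (xs (k + l)))) + cmod (\<phi> (f0 x - h x))"
      unfolding dif by (rule norm_triangle_ineq4)
    also have "\<dots> \<le> M * (K\<phi> * \<delta> * R) + K\<phi> * \<delta> * norm x" using s1' cb[of x] by linarith
    also have "\<dots> = \<delta> * Q" unfolding Q_def by (simp add: algebra_simps)
    finally have "cmod (Tv a \<phi> xs x n l f0 - Tv a \<phi> xs x n l h) \<le> e / 4" using eQ by linarith
    moreover have "cmod (Tv a \<phi> xs x n l h) \<le> \<epsilon>" using N n by blast
    ultimately show "cmod (Tv a \<phi> xs x n l f0) < e"
      using norm_triangle_ineq2[of "Tv a \<phi> xs x n l f0" "Tv a \<phi> xs x n l h"] e unfolding \<epsilon>_def by linarith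
  qed
qed

lemma core:
  fixes \<phi> :: "'b::real_normed_vector \<Rightarrow> complex" and D :: "('a::real_normed_vector \<Rightarrow> 'b) set"
  assumes bl: "bounded_linear \<phi>" and Dbl: "\<forall>f\<in>D. bounded_linear f"
    and Dsc: "\<forall>f\<in>D. \<forall>r. (\<lambda>y. r *\<^sub>R f y) \<in> D"
    and IG: "I_generates D B" and reg: "regular_matrix a" and bnd: "bounded (range xs)"
    and hB: "\<forall>f\<in>B. FA_convergent a (\<lambda>n. \<phi> (f (xs n))) (\<phi> (f x))"
    and f: "f \<in> D"
  shows "FA_convergent a (\<lambda>n. \<phi> (f (xs n))) (\<phi> (f x))"
proof -
  obtain M where M: "\<And>n. summable (\<lambda>k. cmod (a n k))" "\<And>n. (\<Sum>k. cmod (a n k)) \<le> M"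
    using reg unfolding regular_matrix_def by blast
  obtain R where R: "\<And>j. norm (xs j) \<le> R" using bnd unfolding bounded_iff by blast
  have hB': "\<forall>f\<in>B. \<forall>e>0. \<exists>N. \<forall>n\<ge>N. \<forall>l. cmod (Tv a \<phi> xs x n l f) < e"
    using hB unfolding FA_Tv by blast
  have bf: "bounded_linear f" using f Dbl by auto
  have "Bseq (\<lambda>n. \<phi> (f (xs n)))"
  proof -
    have fb: "\<And>j. norm (f (xs j)) \<le> onorm f * R" by (rule bl_bd_xs[OF bf], rule R)
    obtain C where "\<And>j. cmod (\<phi> (f (xs j))) \<le> C"
      using phi_bd_seq[where g=f and xs=xs and c="onorm f * R", OF bl fb] by blast
    thus ?thesis by (rule BseqI')
  qed
  moreover have "\<forall>e>0. \<exists>N. \<forall>n\<ge>N. \<forall>l. cmod (Tv a \<phi> xs x n l f) < e"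
  proof (intro allI impI)
    fix e :: real assume e: "e > 0"
    define r where "r = onorm f + 1"
    have r0: "r > 0" unfolding r_def using onorm_pos_le[OF bf] by simp
    define f0 where "f0 = (\<lambda>y. (1 / r) *\<^sub>R f y)"
    have bf0: "bounded_linear f0" unfolding f0_def by (rule bounded_linear_const_scaleR[OF bf])
    have "onorm f0 = (1 / r) * onorm f" unfolding f0_def using onorm_scaleR[OF bf, of "1/r"] r0 by simp
    also have "\<dots> \<le> 1" using r0 unfolding r_def by (simp add: field_simps)
    finally have "f0 \<in> dual_ball D" unfolding dual_ball_def f0_def using Dsc f by auto
    then obtain N where N: "\<forall>n\<ge>N. \<forall>l. cmod (Tv a \<phi> xs x n l f0) < e / r"
      using core_ball[OF bl Dbl IG M R hB'] e r0 by (metis divide_pos_pos)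
    have feq: "f = (\<lambda>y. \<Sum>i<Suc 0. (\<lambda>_. r) i *\<^sub>R (\<lambda>_. f0) i y)"
    proof -
      show ?thesis unfolding f0_def using r0 by (simp add: fun_eq_iff)
    qed
    have Teq: "Tv a \<phi> xs x n l f = of_real r * Tv a \<phi> xs x n l f0" for n l
    proof -
      have "Tv a \<phi> xs x n l f = (\<Sum>i<Suc 0. of_real ((\<lambda>_. r) i) * Tv a \<phi> xs x n l ((\<lambda>_. f0) i))"
      proof (subst feq, rule Tv_lin[where a=a and n=n, OF bl M(1)])
        have "\<And>j. norm (f0 (xs j)) \<le> onorm f0 * R" by (rule bl_bd_xs[OF bf0], rule R)
        thus "\<And>i. i < Suc 0 \<Longrightarrow> \<exists>c. \<forall>j. norm (f0 (xs j)) \<le> c" by blast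
      qed
      thus ?thesis by simp
    qed
    show "\<exists>N. \<forall>n\<ge>N. \<forall>l. cmod (Tv a \<phi> xs x n l f) < e"
    proof (intro exI allI impI)
      fix n l assume "N \<le> n"
      hence "cmod (Tv a \<phi> xs x n l f0) < e / r" using N by blast
      hence "r * cmod (Tv a \<phi> xs x n l f0) < r * (e / r)" by (rule mult_strict_left_mono[OF _ r0])
      thus "cmod (Tv a \<phi> xs x n l f) < e" unfolding Teq using r0 by (simp add: norm_mult)
    qed
  qed
  ultimately show ?thesis unfolding FA_Tv by blast
qed

definition ces :: "nat \<Rightarrow> nat \<Rightarrow> complex" where
  "ces n k = (if k < Suc n then complex_of_real (1 / real (Suc n)) else 0)"

definition avg :: "nat \<Rightarrow> (nat \<Rightarrow> real) \<Rightarrow> nat \<Rightarrow> real" where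
  "avg n y l = (\<Sum>k<Suc n. y (k + l)) / real (Suc n)"

lemma ces_sum: "(\<Sum>k. ces n k * complex_of_real (s (k + l))) = complex_of_real (avg n s l)"
proof -
  have "(\<Sum>k. ces n k * complex_of_real (s (k + l))) = (\<Sum>k<Suc n. ces n k * complex_of_real (s (k + l)))"
    by (rule suminf_finite) (auto simp: ces_def)
  also have "\<dots> = (\<Sum>k<Suc n. complex_of_real (s (k + l) / real (Suc n)))"
    by (rule sum.cong) (auto simp: ces_def)
  also have "\<dots> = complex_of_real (avg n s l)"
    unfolding avg_def of_real_sum[symmetric] sum_divide_distrib ..
  finally show ?thesis .
qed

lemma ces_regular: "regular_matrix ces"
  unfolding regular_matrix_def
proof (intro conjI allI exI)
  fix n
  have e: "(\<Sum>k. cmod (ces n k)) = (\<Sum>k<Suc n. cmod (ces n k))"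
    by (rule suminf_finite) (auto simp: ces_def)
  have "(\<Sum>k<Suc n. cmod (ces n k)) = (\<Sum>k<Suc n. 1 / real (Suc n))"
  proof (rule sum.cong)
    fix k assume "k \<in> {..<Suc n}"
    hence "ces n k = complex_of_real (1 / real (Suc n))" by (simp add: ces_def)
    thus "cmod (ces n k) = 1 / real (Suc n)" by (simp only: norm_of_real) simp
  qed simp
  also have "\<dots> = 1" by simp
  finally show "(\<Sum>k. cmod (ces n k)) \<le> 1" using e by simp
  show "summable (\<lambda>k. cmod (ces n k))"
    by (rule summable_finite[of "{..<Suc n}"]) (auto simp: ces_def)
next
  have "(\<Sum>k. ces n k) = 1" for n
  proof -
    have "(\<Sum>k. ces n k) = (\<Sum>k<Suc n. ces n k)" by (rule suminf_finite) (auto simp: ces_def)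
    also have "\<dots> = (\<Sum>k<Suc n. complex_of_real (1 / real (Suc n)))" by (rule sum.cong) (auto simp: ces_def)
    also have "\<dots> = complex_of_real (\<Sum>k<Suc n. 1 / real (Suc n))" by (simp only: of_real_sum)
    also have "\<dots> = 1" by simp
    finally show ?thesis .
  qed
  thus "(\<lambda>n. \<Sum>k. ces n k) \<longlonglongrightarrow> 1" by simp
next
  fix k
  have lim: "(\<lambda>n. complex_of_real (inverse (real (Suc n)))) \<longlonglongrightarrow> complex_of_real 0"
    by (rule tendsto_of_real[OF LIMSEQ_inverse_real_of_nat])
  have ev: "eventually (\<lambda>n. complex_of_real (inverse (real (Suc n))) = ces n k) sequentially"
    unfolding eventually_sequentially
    by (rule exI[of _ k]) (auto simp: ces_def field_simps)
  show "(\<lambda>n. ces n k) \<longlonglongrightarrow> 0" using Lim_transform_eventually[OF lim ev] by simp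
qed

lemma FA_ces:
  "FA_convergent ces (\<lambda>n. complex_of_real (s n)) (complex_of_real t) \<longleftrightarrow>
     Bseq s \<and> (\<forall>e>0. \<exists>N. \<forall>n\<ge>N. \<forall>l. \<bar>avg n s l - t\<bar> < e)"
proof -
  have b: "Bseq (\<lambda>n. complex_of_real (s n)) \<longleftrightarrow> Bseq s" unfolding Bseq_def by simp
  have c: "cmod ((\<Sum>k. ces n k * complex_of_real (s (k + l))) - complex_of_real t) = \<bar>avg n s l - t\<bar>" for n l
    unfolding ces_sum by (metis norm_of_real of_real_diff)
  show ?thesis unfolding FA_convergent_def b c ..
qed

lemma Bseq_abs_bound: fixes y :: "nat \<Rightarrow> real" shows "Bseq y \<Longrightarrow> \<exists>B. \<forall>k. \<bar>y k\<bar> \<le> B"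
  unfolding Bseq_def real_norm_def by blast

lemma BseqI_abs: fixes y :: "nat \<Rightarrow> real" shows "(\<And>k. \<bar>y k\<bar> \<le> B) \<Longrightarrow> Bseq y"
  by (rule BseqI'[of y B]) simp

lemma Bseq_plus: fixes x y :: "nat \<Rightarrow> real" assumes "Bseq x" "Bseq y" shows "Bseq (\<lambda>k. x k + y k)"
proof -
  obtain A B where "\<forall>k. \<bar>x k\<bar> \<le> A" "\<forall>k. \<bar>y k\<bar> \<le> B" using assms Bseq_abs_bound by metis
  hence "\<bar>x k + y k\<bar> \<le> A + B" for k using abs_triangle_ineq[of "x k" "y k"] by (smt (verit))
  thus ?thesis by (rule BseqI_abs)
qed

lemma Bseq_cm: fixes x :: "nat \<Rightarrow> real" assumes "Bseq x" shows "Bseq (\<lambda>k. c * x k)"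
  using Bseq_mult[OF Bfun_const assms] by simp

context
  fixes L assumes BL: "banach_limit L"
begin

lemma BL_add: "Bseq x \<Longrightarrow> Bseq y \<Longrightarrow> L (\<lambda>k. x k + y k) = L x + L y"
  using BL unfolding banach_limit_def by blast
lemma BL_mult: "Bseq x \<Longrightarrow> L (\<lambda>k. c * x k) = c * L x"
  using BL unfolding banach_limit_def by blast
lemma BL_one: "L (\<lambda>k. 1) = 1"
  using BL unfolding banach_limit_def by blast
lemma BL_pos: "Bseq x \<Longrightarrow> (\<And>k. x k \<ge> 0) \<Longrightarrow> L x \<ge> 0"
  using BL unfolding banach_limit_def by blast
lemma BL_shift: "Bseq x \<Longrightarrow> L (\<lambda>k. x (Suc k)) = L x"
  using BL unfolding banach_limit_def by blast

lemma BL_const: "L (\<lambda>k. c) = c"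
  using BL_mult[of "\<lambda>k. 1" c] BL_one by (simp add: Bfun_const)

lemma BL_diff: "Bseq x \<Longrightarrow> Bseq y \<Longrightarrow> L (\<lambda>k. x k - y k) = L x - L y"
proof -
  assume x: "Bseq x" and y: "Bseq y"
  have y': "Bseq (\<lambda>k. (-1) * y k)" by (rule Bseq_cm[OF y])
  have "L (\<lambda>k. x k - y k) = L (\<lambda>k. x k + (-1) * y k)" by simp
  also have "\<dots> = L x + L (\<lambda>k. (-1) * y k)" by (rule BL_add[OF x y'])
  also have "\<dots> = L x - L y" using BL_mult[OF y, of "-1"] by simp
  finally show ?thesis .
qed

lemma BL_bound: assumes b: "\<And>k. \<bar>y k\<bar> \<le> B" shows "\<bar>L y\<bar> \<le> B"
proof -
  have y: "Bseq y" by (rule BseqI_abs[OF b])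
  have c: "Bseq (\<lambda>k. B)" by (rule Bfun_const)
  have "L (\<lambda>k. B - y k) \<ge> 0" proof (rule BL_pos)
    show "Bseq (\<lambda>k. B - y k)" using Bseq_plus[OF c Bseq_cm[OF y, of "-1"]] by simp
    show "\<And>k. 0 \<le> B - y k" using b by (smt (verit))
  qed
  moreover have "L (\<lambda>k. B - y k) = B - L y" using BL_diff[OF c y] BL_const by simp
  moreover have "L (\<lambda>k. B + y k) \<ge> 0"
  proof (rule BL_pos)
    show "Bseq (\<lambda>k. B + y k)" by (rule Bseq_plus[OF c y])
    show "\<And>k. 0 \<le> B + y k" using b by (smt (verit))
  qed
  moreover have "L (\<lambda>k. B + y k) = B + L y" using BL_add[OF c y] BL_const by simp
  ultimately show ?thesis by linarith
qed

lemma Bseq_shift: fixes y :: "nat \<Rightarrow> real" shows "Bseq y \<Longrightarrow> Bseq (\<lambda>k. y (k + j))"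
proof -
  assume "Bseq y" then obtain B where "\<forall>k. \<bar>y k\<bar> \<le> B" using Bseq_abs_bound by blast
  thus ?thesis by (intro BseqI_abs) blast
qed

lemma BL_shiftn: "Bseq y \<Longrightarrow> L (\<lambda>k. y (k + j)) = L y"
proof (induction j)
  case 0 thus ?case by simp
next
  case (Suc j)
  have "L (\<lambda>k. y (k + Suc j)) = L (\<lambda>k. (\<lambda>k. y (k + j)) (Suc k))" by simp
  also have "\<dots> = L (\<lambda>k. y (k + j))" by (rule BL_shift[OF Bseq_shift[OF Suc.prems]])
  finally show ?case using Suc by simp
qed

lemma Bseq_psum: fixes y :: "nat \<Rightarrow> real" shows "Bseq y \<Longrightarrow> Bseq (\<lambda>l. \<Sum>k<m. y (k + l))"
proof -
  assume "Bseq y" then obtain B where B: "\<forall>k. \<bar>y k\<bar> \<le> B" using Bseq_abs_bound by blast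
  have "\<bar>\<Sum>k<m. y (k + l)\<bar> \<le> real m * B" for l
  proof -
    have "\<bar>\<Sum>k<m. y (k + l)\<bar> \<le> (\<Sum>k<m. \<bar>y (k + l)\<bar>)" by (rule sum_abs)
    also have "\<dots> \<le> (\<Sum>k<m. B)" by (rule sum_mono) (use B in blast)
    finally show ?thesis by simp
  qed
  thus ?thesis by (rule BseqI_abs)
qed

lemma BL_psum: "Bseq y \<Longrightarrow> L (\<lambda>l. \<Sum>k<m. y (k + l)) = real m * L y"
proof (induction m)
  case 0 thus ?case using BL_const[of 0] by simp
next
  case (Suc m)
  have "L (\<lambda>l. \<Sum>k<Suc m. y (k + l)) = L (\<lambda>l. (\<Sum>k<m. y (k + l)) + y (m + l))" by simp
  also have "\<dots> = L (\<lambda>l. \<Sum>k<m. y (k + l)) + L (\<lambda>l. y (m + l))"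
    by (rule BL_add[OF Bseq_psum[OF Suc.prems]]) (use Bseq_shift[OF Suc.prems, of m] in \<open>simp add: add.commute\<close>)
  also have "L (\<lambda>l. y (m + l)) = L y" using BL_shiftn[OF Suc.prems, of m] by (simp add: add.commute)
  finally show ?case using Suc by (simp add: algebra_simps)
qed

lemma BL_avg: "Bseq y \<Longrightarrow> L (avg n y) = L y"
proof -
  assume y: "Bseq y"
  have eq: "avg n y = (\<lambda>l. (1 / real (Suc n)) * (\<Sum>k<Suc n. y (k + l)))" unfolding avg_def by auto
  have "L (avg n y) = (1 / real (Suc n)) * L (\<lambda>l. \<Sum>k<Suc n. y (k + l))"
    unfolding eq by (rule BL_mult[OF Bseq_psum[OF y]])
  also have "\<dots> = L y" using BL_psum[OF y, of "Suc n"] by simp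
  finally show ?thesis .
qed

lemma unif_imp_BL:
  assumes y: "Bseq y" and u: "\<forall>e>0. \<exists>N. \<forall>n\<ge>N. \<forall>l. \<bar>avg n y l - t\<bar> < e"
  shows "L y = t"
proof -
  have "\<bar>L y - t\<bar> \<le> e" if e: "e > 0" for e
  proof -
    obtain N where N: "\<forall>l. \<bar>avg N y l - t\<bar> < e" using u e by blast
    have "\<bar>L (\<lambda>l. avg N y l - t)\<bar> \<le> e" by (rule BL_bound) (use N in \<open>auto intro: less_imp_le\<close>)
    moreover have "L (\<lambda>l. avg N y l - t) = L y - t"
    proof -
      have eq: "avg N y = (\<lambda>l. (1 / real (Suc N)) * (\<Sum>k<Suc N. y (k + l)))" unfolding avg_def by auto
      have "Bseq (avg N y)" unfolding eq by (rule Bseq_cm[OF Bseq_psum[OF y]])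
      hence "L (\<lambda>l. avg N y l - t) = L (avg N y) - L (\<lambda>l. t)" using BL_diff[of "avg N y" "\<lambda>l. t"] Bfun_const by blast
      thus ?thesis using BL_avg[OF y] BL_const by simp
    qed
    ultimately show ?thesis by simp
  qed
  thus ?thesis by (metis abs_le_zero_iff eq_iff_diff_eq_0 field_le_epsilon add_0 abs_ge_zero order.antisym)
qed

end

lemma coord_ev:
  fixes L :: "'c \<Rightarrow> real"
  assumes d: "0 < \<delta>"
  shows "eventually (\<lambda>g. \<bar>g y - L y\<bar> < \<delta>) (nhds L)"
proof -
  have c: "continuous_on UNIV (\<lambda>g::'c \<Rightarrow> real. g y)" by simp
  have ob: "open (ball (L y) \<delta>)" by simp
  have "open ((\<lambda>g::'c \<Rightarrow> real. g y) -` ball (L y) \<delta> \<inter> UNIV)"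
    using c ob continuous_on_open_vimage[of UNIV "\<lambda>g::'c \<Rightarrow> real. g y"] by blast
  hence o: "open {g::'c \<Rightarrow> real. \<bar>g y - L y\<bar> < \<delta>}"
    by (simp add: ball_def dist_real_def abs_minus_commute)
  show ?thesis unfolding eventually_nhds
    by (rule exI[of _ "{g::'c \<Rightarrow> real. \<bar>g y - L y\<bar> < \<delta>}"]) (use o d in simp)
qed

lemma cluster_exists:
  fixes Lj :: "nat \<Rightarrow> 'c::topological_space"
  assumes K: "compact K" and inK: "\<And>j. Lj j \<in> K"
  shows "\<exists>L\<in>K. \<forall>P. eventually P (nhds L) \<longrightarrow> (\<forall>N. \<exists>j\<ge>N. P (Lj j))"
proof -
  define F where "F = filtermap Lj sequentially"
  have Fb: "F \<noteq> bot" unfolding F_def by (simp add: filtermap_bot_iff)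
  have FK: "eventually (\<lambda>x. x \<in> K) F" unfolding F_def eventually_filtermap using inK by simp
  obtain L where L: "L \<in> K" "inf (nhds L) F \<noteq> bot"
    using K Fb FK unfolding compact_filter by blast
  have "\<forall>N. \<exists>j\<ge>N. P (Lj j)" if P: "eventually P (nhds L)" for P
  proof
    fix N
    show "\<exists>j\<ge>N. P (Lj j)"
    proof (rule ccontr)
      assume no: "\<not> (\<exists>j\<ge>N. P (Lj j))"
      have "eventually (\<lambda>g. \<not> P g) F" unfolding F_def eventually_filtermap eventually_sequentially
        using no by blast
      hence "eventually (\<lambda>x. False) (inf (nhds L) F)" unfolding eventually_inf using P by blast
      thus False using L(2) by (simp add: eventually_False)
    qed
  qed
  thus ?thesis using L(1) by blast
qed

lemma compact_box: "compact (PiE UNIV (\<lambda>y::'c. {-(b y)..(b y::real)}))"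
proof -
  have "compactin (product_topology (\<lambda>_. euclidean) UNIV) (PiE UNIV (\<lambda>y::'c. {-(b y)..(b y::real)}))"
    unfolding compactin_PiE by simp
  thus ?thesis unfolding euclidean_product_topology compactin_euclidean_iff .
qed

lemma avg_bound: fixes y :: "nat \<Rightarrow> real" assumes "\<And>k. \<bar>y k\<bar> \<le> B" shows "\<bar>avg n y l\<bar> \<le> B"
proof -
  have "\<bar>\<Sum>k<Suc n. y (k + l)\<bar> \<le> (\<Sum>k<Suc n. \<bar>y (k + l)\<bar>)" by (rule sum_abs)
  also have "\<dots> \<le> (\<Sum>k<Suc n. B)" by (rule sum_mono) (use assms in blast)
  finally have "\<bar>\<Sum>k<Suc n. y (k + l)\<bar> \<le> real (Suc n) * B" by simp
  thus ?thesis unfolding avg_def by (simp add: field_simps del: of_nat_Suc)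
qed

lemma avg_add: "avg n (\<lambda>k. x k + y k) l = avg n x l + avg n y l"
  unfolding avg_def by (simp add: sum.distrib add_divide_distrib)

lemma avg_mult: "avg n (\<lambda>k. c * x k) l = c * avg n x l"
  unfolding avg_def by (simp only: sum_distrib_left[symmetric]) simp

lemma avg_one: "avg n (\<lambda>k. 1) l = 1"
  unfolding avg_def by simp

lemma avg_nonneg: "(\<And>k. x k \<ge> 0) \<Longrightarrow> avg n x l \<ge> 0"
  unfolding avg_def by (intro divide_nonneg_nonneg sum_nonneg) auto

lemma avg_shift:
  fixes x :: "nat \<Rightarrow> real" assumes b: "\<And>k. \<bar>x k\<bar> \<le> B"
  shows "\<bar>avg n (\<lambda>k. x (Suc k)) l - avg n x l\<bar> \<le> 2 * B / real (Suc n)"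
proof -
  have "(\<Sum>k<Suc n. x (Suc k + l)) - (\<Sum>k<Suc n. x (k + l)) = (\<Sum>k<Suc n. x (Suc k + l) - x (k + l))"
    by (simp add: sum_subtractf)
  also have "\<dots> = x (Suc n + l) - x (0 + l)"
    by (rule sum_lessThan_telescope[of "\<lambda>k. x (k + l)"])
  finally have e: "(\<Sum>k<Suc n. x (Suc k + l)) - (\<Sum>k<Suc n. x (k + l)) = x (Suc n + l) - x l" by simp
  have "avg n (\<lambda>k. x (Suc k)) l - avg n x l = (x (Suc n + l) - x l) / real (Suc n)"
    unfolding avg_def using e by (simp add: diff_divide_distrib[symmetric])
  moreover have "\<bar>x (Suc n + l) - x l\<bar> \<le> 2 * B" using b[of "Suc n + l"] b[of l] by linarith
  ultimately show ?thesis by (simp add: divide_right_mono del: of_nat_Suc)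
qed

lemma eps_eq:
  fixes a b C :: real
  assumes h: "\<And>\<delta>. \<delta> > 0 \<Longrightarrow> \<bar>a - b\<bar> \<le> C * \<delta>"
  shows "a = b"
proof (rule ccontr)
  assume ne: "a \<noteq> b"
  define d where "d = \<bar>a - b\<bar>"
  have d0: "d > 0" unfolding d_def using ne by simp
  define \<delta> where "\<delta> = d / (2 * (\<bar>C\<bar> + 1))"
  have p: "\<delta> > 0" unfolding \<delta>_def using d0 by (simp add: add_pos_nonneg)
  have "C * \<delta> \<le> \<bar>C\<bar> * \<delta>" using p by (simp add: mult_right_mono)
  also have "\<bar>C\<bar> * \<delta> < d"
  proof -
    have "\<bar>C\<bar> * \<delta> = d * (\<bar>C\<bar> / (2 * (\<bar>C\<bar> + 1)))" unfolding \<delta>_def by (simp add: field_simps)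
    also have "\<dots> < d * 1"
      by (rule mult_strict_left_mono[OF _ d0]) (simp add: field_simps add_pos_nonneg)
    finally show ?thesis by simp
  qed
  finally show False using h[OF p] unfolding d_def by simp
qed

lemma almost_imp_unif:
  fixes s :: "nat \<Rightarrow> real"
  assumes s: "Bseq s" and alm: "\<forall>L. banach_limit L \<longrightarrow> L s = t"
  shows "\<forall>e>0. \<exists>N. \<forall>n\<ge>N. \<forall>l. \<bar>avg n s l - t\<bar> < e"
proof (rule ccontr)
  assume "\<not> ?thesis"
  then obtain e where e: "e > 0" and bad: "\<forall>N. \<exists>n\<ge>N. \<exists>l. \<bar>avg n s l - t\<bar> \<ge> e"
    by (auto simp: not_less)
  have "\<forall>N. \<exists>p. N \<le> fst p \<and> e \<le> \<bar>avg (fst p) s (snd p) - t\<bar>"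
  proof
    fix N
    obtain n l where "n \<ge> N" "\<bar>avg n s l - t\<bar> \<ge> e" using bad by blast
    thus "\<exists>p. N \<le> fst p \<and> e \<le> \<bar>avg (fst p) s (snd p) - t\<bar>" by (intro exI[of _ "(n, l)"]) simp
  qed
  hence "\<exists>f. \<forall>N. N \<le> fst (f N) \<and> e \<le> \<bar>avg (fst (f N)) s (snd (f N)) - t\<bar>" by (rule choice)
  then obtain f where f: "\<forall>N. N \<le> fst (f N) \<and> e \<le> \<bar>avg (fst (f N)) s (snd (f N)) - t\<bar>" by blast
  define nn where "nn j = fst (f j)" for j
  define ll where "ll j = snd (f j)" for j
  have nn: "\<And>j. nn j \<ge> j" and ll: "\<And>j. \<bar>avg (nn j) s (ll j) - t\<bar> \<ge> e"
    unfolding nn_def ll_def using f by auto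
  define bnd where "bnd y = (if Bseq y then (SOME B. \<forall>k. \<bar>y k\<bar> \<le> B) else 0)" for y :: "nat \<Rightarrow> real"
  have bnd: "\<forall>k. \<bar>y k\<bar> \<le> bnd y" if "Bseq y" for y
  proof -
    have "\<exists>B. \<forall>k. \<bar>y k\<bar> \<le> B" by (rule Bseq_abs_bound[OF that])
    hence "\<forall>k. \<bar>y k\<bar> \<le> (SOME B. \<forall>k. \<bar>y k\<bar> \<le> B)" by (rule someI_ex)
    thus ?thesis unfolding bnd_def using that by simp
  qed
  define Lj where "Lj j y = (if Bseq y then avg (nn j) y (ll j) else 0)" for j y
  define K where "K = PiE UNIV (\<lambda>y. {-(bnd y)..bnd y})"
  have inK: "Lj j \<in> K" for j
    unfolding K_def
  proof (rule PiE_I)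
    fix y :: "nat \<Rightarrow> real"
    show "Lj j y \<in> {- bnd y..bnd y}"
    proof (cases "Bseq y")
      case True
      have "\<bar>avg (nn j) y (ll j)\<bar> \<le> bnd y" by (rule avg_bound) (use bnd[OF True] in blast)
      thus ?thesis unfolding Lj_def using True by (simp add: abs_le_iff)
    next
      case False thus ?thesis unfolding Lj_def bnd_def by simp
    qed
  qed simp
  obtain L where L: "\<forall>P. eventually P (nhds L) \<longrightarrow> (\<forall>N. \<exists>j\<ge>N. P (Lj j))"
  proof -
    have cK: "compact K" unfolding K_def by (rule compact_box)
    have "\<exists>L\<in>K. \<forall>P. eventually P (nhds L) \<longrightarrow> (\<forall>N. \<exists>j\<ge>N. P (Lj j))"
      by (rule cluster_exists[OF cK]) (rule inK)
    thus ?thesis using that by blast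
  qed
  have approx: "\<exists>j\<ge>N. \<bar>Lj j ya - L ya\<bar> < \<delta> \<and> \<bar>Lj j yb - L yb\<bar> < \<delta> \<and> \<bar>Lj j yc - L yc\<bar> < \<delta>"
    if d: "\<delta> > 0" for ya yb yc \<delta> N
  proof -
    have "eventually (\<lambda>g. \<bar>g ya - L ya\<bar> < \<delta> \<and> \<bar>g yb - L yb\<bar> < \<delta> \<and> \<bar>g yc - L yc\<bar> < \<delta>) (nhds L)"
      by (intro eventually_conj coord_ev[OF d])
    from L[rule_format, OF this] show ?thesis by blast
  qed
  have BLL: "banach_limit L"
    unfolding banach_limit_def
  proof (intro conjI allI impI)
    fix x y :: "nat \<Rightarrow> real" assume xy: "Bseq x \<and> Bseq y"
    have xy': "Bseq (\<lambda>k. x k + y k)" using xy Bseq_plus by blast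
    have "\<bar>L (\<lambda>k. x k + y k) - (L x + L y)\<bar> \<le> 3 * \<delta>" if d: "\<delta> > 0" for \<delta>
    proof -
      obtain j where "\<bar>Lj j x - L x\<bar> < \<delta>" "\<bar>Lj j y - L y\<bar> < \<delta>" "\<bar>Lj j (\<lambda>k. x k + y k) - L (\<lambda>k. x k + y k)\<bar> < \<delta>"
        using approx[OF d, where ya=x and yb=y and yc="\<lambda>k. x k + y k" and N=0] by blast
      moreover have "Lj j (\<lambda>k. x k + y k) = Lj j x + Lj j y" unfolding Lj_def using xy xy' by (simp add: avg_add)
      ultimately show ?thesis by linarith
    qed
    thus "L (\<lambda>k. x k + y k) = L x + L y" by (rule eps_eq)
  next
    have "\<bar>L (\<lambda>k. 1) - 1\<bar> \<le> 1 * \<delta>" if d: "\<delta> > 0" for \<delta>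
    proof -
      obtain j where "\<bar>Lj j (\<lambda>k. 1) - L (\<lambda>k. 1)\<bar> < \<delta>"
        using approx[OF d, where ya="\<lambda>k. 1" and yb="\<lambda>k. 1" and yc="\<lambda>k. 1" and N=0] by blast
      moreover have "Lj j (\<lambda>k. 1) = 1" unfolding Lj_def by (simp add: avg_one)
      ultimately show ?thesis by simp
    qed
    thus "L (\<lambda>k. 1) = 1" by (rule eps_eq)
  next
    fix c :: real and x :: "nat \<Rightarrow> real" assume x: "Bseq x"
    have cx: "Bseq (\<lambda>k. c * x k)" by (rule Bseq_cm[OF x])
    have "\<bar>L (\<lambda>k. c * x k) - c * L x\<bar> \<le> (1 + \<bar>c\<bar>) * \<delta>" if d: "\<delta> > 0" for \<delta>
    proof -
      obtain j where j1: "\<bar>Lj j x - L x\<bar> < \<delta>" and j2: "\<bar>Lj j (\<lambda>k. c * x k) - L (\<lambda>k. c * x k)\<bar> < \<delta>"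
        using approx[OF d, where ya=x and yb=x and yc="\<lambda>k. c * x k" and N=0] by blast
      have e: "Lj j (\<lambda>k. c * x k) = c * Lj j x" unfolding Lj_def using x cx by (simp add: avg_mult)
      have "\<bar>c * Lj j x - c * L x\<bar> = \<bar>c\<bar> * \<bar>Lj j x - L x\<bar>" by (simp add: abs_mult[symmetric] right_diff_distrib)
      also have "\<dots> \<le> \<bar>c\<bar> * \<delta>" using j1 by (intro mult_left_mono) auto
      finally have "\<bar>c * Lj j x - c * L x\<bar> \<le> \<bar>c\<bar> * \<delta>" .
      thus ?thesis using j2 unfolding e by (simp add: algebra_simps)
    qed
    thus "L (\<lambda>k. c * x k) = c * L x" by (rule eps_eq)
  next
    fix x :: "nat \<Rightarrow> real" assume x: "Bseq x \<and> (\<forall>k. 0 \<le> x k)"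
    show "0 \<le> L x"
    proof (rule ccontr)
      assume "\<not> 0 \<le> L x"
      hence d: "- L x > 0" by simp
      obtain j where "\<bar>Lj j x - L x\<bar> < - L x"
        using approx[OF d, where ya=x and yb=x and yc=x and N=0] by blast
      moreover have "Lj j x \<ge> 0" unfolding Lj_def using x by (simp add: avg_nonneg)
      ultimately show False by linarith
    qed
  next
    fix x :: "nat \<Rightarrow> real" assume x: "Bseq x"
    obtain B where B: "\<And>k. \<bar>x k\<bar> \<le> B" using Bseq_abs_bound[OF x] by blast
    have B0: "0 \<le> B" using B[of 0] by linarith
    have xs: "Bseq (\<lambda>k. x (Suc k))" by (rule BseqI_abs) (rule B)
    have "\<bar>L (\<lambda>k. x (Suc k)) - L x\<bar> \<le> 3 * \<delta>" if d: "\<delta> > 0" for \<delta>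
    proof -
      obtain N :: nat where N: "2 * B / \<delta> < real N" using reals_Archimedean2 by blast
      have NB: "2 * B / real (Suc N) < \<delta>"
      proof -
        have "2 * B < \<delta> * real N" using N d by (simp add: field_simps)
        also have "\<dots> < \<delta> * real (Suc N)" using d by simp
        finally show ?thesis by (simp add: field_simps del: of_nat_Suc)
      qed
      obtain j where j: "j \<ge> N" and j1: "\<bar>Lj j x - L x\<bar> < \<delta>"
        and j2: "\<bar>Lj j (\<lambda>k. x (Suc k)) - L (\<lambda>k. x (Suc k))\<bar> < \<delta>"
        using approx[OF d, where ya=x and yb=x and yc="\<lambda>k. x (Suc k)" and N=N] by blast
      have "\<bar>Lj j (\<lambda>k. x (Suc k)) - Lj j x\<bar> \<le> 2 * B / real (Suc (nn j))"
        unfolding Lj_def using x xs avg_shift[OF B] by simp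
      also have "\<dots> \<le> 2 * B / real (Suc N)"
        using nn[of j] j B0 by (intro divide_left_mono) auto
      finally have "\<bar>Lj j (\<lambda>k. x (Suc k)) - Lj j x\<bar> < \<delta>" using NB by linarith
      thus ?thesis using j1 j2 by linarith
    qed
    thus "L (\<lambda>k. x (Suc k)) = L x" by (rule eps_eq)
  qed
  have "\<bar>L s - t\<bar> \<ge> e / 2"
  proof -
    have "e / 2 > 0" using e by simp
    then obtain j where "\<bar>Lj j s - L s\<bar> < e / 2" using approx[where \<delta>="e/2" and ya=s and yb=s and yc=s and N=0] by blast
    moreover have "\<bar>Lj j s - t\<bar> \<ge> e" unfolding Lj_def using s ll by simp
    ultimately show ?thesis by linarith
  qed
  moreover have "L s = t" using alm BLL by blast
  ultimately show False using e by simp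
qed

lemma almost_iff:
  "almost_convergent s t \<longleftrightarrow> FA_convergent ces (\<lambda>n. complex_of_real (s n)) (complex_of_real t)"
proof
  assume a: "almost_convergent s t"
  hence "Bseq s" "\<forall>L. banach_limit L \<longrightarrow> L s = t" unfolding almost_convergent_def by auto
  thus "FA_convergent ces (\<lambda>n. complex_of_real (s n)) (complex_of_real t)"
    unfolding FA_ces using almost_imp_unif by blast
next
  assume "FA_convergent ces (\<lambda>n. complex_of_real (s n)) (complex_of_real t)"
  hence s: "Bseq s" and u: "\<forall>e>0. \<exists>N. \<forall>n\<ge>N. \<forall>l. \<bar>avg n s l - t\<bar> < e" unfolding FA_ces by auto
  have "L s = t" if "banach_limit L" for L by (rule unif_imp_BL[OF that s u])
  thus "almost_convergent s t" unfolding almost_convergent_def using s by blast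
qed

lemma part1:
  fixes J :: "'a::banach \<Rightarrow> 'a" and B :: "('a \<Rightarrow> complex) set" and xs :: "nat \<Rightarrow> 'a"
  assumes "I_generates (cdual J) B" "regular_matrix a" "bounded (range xs)"
    "\<forall>f\<in>B. FA_convergent a (\<lambda>n. f (xs n)) (f x)"
  shows "\<forall>f\<in>cdual J. FA_convergent a (\<lambda>n. f (xs n)) (f x)"
proof
  fix f assume f: "f \<in> cdual J"
  have Dbl: "\<forall>f\<in>cdual J. bounded_linear f" unfolding cdual_def by auto
  have Dsc: "\<forall>f\<in>cdual J. \<forall>r. (\<lambda>y. r *\<^sub>R f y) \<in> cdual J"
  proof (intro ballI allI)
    fix g r assume g: "g \<in> cdual J"
    hence "bounded_linear g" "\<forall>y. g (J y) = \<i> * g y" unfolding cdual_def by auto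
    moreover have "bounded_linear (\<lambda>y. r *\<^sub>R g y)" by (rule bounded_linear_const_scaleR) fact
    ultimately show "(\<lambda>y. r *\<^sub>R g y) \<in> cdual J" unfolding cdual_def
      by (simp add: scaleR_conv_of_real mult.left_commute)
  qed
  show "FA_convergent a (\<lambda>n. f (xs n)) (f x)"
    using core[where \<phi>="\<lambda>z. z", OF bounded_linear_ident Dbl Dsc assms f] by simp
qed

lemma part2:
  fixes B :: "('b::banach \<Rightarrow> real) set" and xs :: "nat \<Rightarrow> 'b"
  assumes "I_generates rdual B" "regular_matrix a" "bounded (range xs)"
    "\<forall>f\<in>B. FA_convergent a (\<lambda>n. complex_of_real (f (xs n))) (complex_of_real (f x))"
  shows "\<forall>f\<in>rdual. FA_convergent a (\<lambda>n. complex_of_real (f (xs n))) (complex_of_real (f x))"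
proof
  fix f assume f: "f \<in> (rdual :: ('b \<Rightarrow> real) set)"
  have Dbl: "\<forall>f\<in>(rdual :: ('b \<Rightarrow> real) set). bounded_linear f" unfolding rdual_def by auto
  have Dsc: "\<forall>f\<in>(rdual :: ('b \<Rightarrow> real) set). \<forall>r. (\<lambda>y. r *\<^sub>R f y) \<in> rdual"
  proof (intro ballI allI)
    fix g r assume "g \<in> (rdual :: ('b \<Rightarrow> real) set)"
    hence "bounded_linear g" unfolding rdual_def by auto
    hence "bounded_linear (\<lambda>y. r *\<^sub>R g y)" by (rule bounded_linear_const_scaleR)
    thus "(\<lambda>y. r *\<^sub>R g y) \<in> rdual" unfolding rdual_def by simp
  qed
  show "FA_convergent a (\<lambda>n. complex_of_real (f (xs n))) (complex_of_real (f x))"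
    by (rule core[OF bounded_linear_of_real Dbl Dsc assms f])
qed

theorem corollary3p6:
  shows "(\<forall>(J :: 'a::banach \<Rightarrow> 'a) (B :: ('a \<Rightarrow> complex) set) a (xs :: nat \<Rightarrow> 'a) x.
            complex_structure J \<and> I_generates (cdual J) B \<and> regular_matrix a \<and> bounded (range xs)
            \<and> (\<forall>f\<in>B. FA_convergent a (\<lambda>n. f (xs n)) (f x))
            \<longrightarrow> (\<forall>f\<in>cdual J. FA_convergent a (\<lambda>n. f (xs n)) (f x)))
       \<and> (\<forall>(B :: ('b::banach \<Rightarrow> real) set) a (xs :: nat \<Rightarrow> 'b) x.
            I_generates rdual B \<and> regular_matrix a \<and> bounded (range xs)
            \<and> (\<forall>f\<in>B. FA_convergent a (\<lambda>n. complex_of_real (f (xs n))) (complex_of_real (f x)))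
            \<longrightarrow> (\<forall>f\<in>rdual. FA_convergent a (\<lambda>n. complex_of_real (f (xs n))) (complex_of_real (f x))))
       \<and> (\<forall>(B :: ('b::banach \<Rightarrow> real) set) (xs :: nat \<Rightarrow> 'b) x.
            I_generates rdual B \<and> bounded (range xs)
            \<and> (\<forall>f\<in>B. almost_convergent (\<lambda>n. f (xs n)) (f x))
            \<longrightarrow> (\<forall>f\<in>rdual. almost_convergent (\<lambda>n. f (xs n)) (f x)))"
proof (intro conjI allI impI)
  fix J :: "'a \<Rightarrow> 'a" and B :: "('a \<Rightarrow> complex) set" and a and xs :: "nat \<Rightarrow> 'a" and x
  assume "complex_structure J \<and> I_generates (cdual J) B \<and> regular_matrix a \<and> bounded (range xs)
            \<and> (\<forall>f\<in>B. FA_convergent a (\<lambda>n. f (xs n)) (f x))"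
  thus "\<forall>f\<in>cdual J. FA_convergent a (\<lambda>n. f (xs n)) (f x)" using part1 by blast
next
  fix B :: "('b \<Rightarrow> real) set" and a and xs :: "nat \<Rightarrow> 'b" and x
  assume "I_generates rdual B \<and> regular_matrix a \<and> bounded (range xs)
            \<and> (\<forall>f\<in>B. FA_convergent a (\<lambda>n. complex_of_real (f (xs n))) (complex_of_real (f x)))"
  thus "\<forall>f\<in>rdual. FA_convergent a (\<lambda>n. complex_of_real (f (xs n))) (complex_of_real (f x))"
    using part2 by blast
next
  fix B :: "('b \<Rightarrow> real) set" and xs :: "nat \<Rightarrow> 'b" and x
  assume h: "I_generates rdual B \<and> bounded (range xs) \<and> (\<forall>f\<in>B. almost_convergent (\<lambda>n. f (xs n)) (f x))"
  hence "\<forall>f\<in>B. FA_convergent ces (\<lambda>n. complex_of_real (f (xs n))) (complex_of_real (f x))"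
    unfolding almost_iff by blast
  hence "\<forall>f\<in>rdual. FA_convergent ces (\<lambda>n. complex_of_real (f (xs n))) (complex_of_real (f x))"
    using part2[of B ces xs x] h ces_regular by blast
  thus "\<forall>f\<in>rdual. almost_convergent (\<lambda>n. f (xs n)) (f x)" unfolding almost_iff .
qed

end
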